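(* Let $G$ be a disconnected skew graph with table $T$. Then the non-empty boxes of $T$ form one of the following four patterns: (1) pattern $\boxplus$: there are exactly four non-empty boxes, located at $(i_1,j_1),(i_1,j_2),(i_2,j_1),(i_2,j_2)$ for some $i_1\ne i_2$ and $j_1\ne j_2$; (2) pattern $\mathcal{R}$: all non-empty boxes lie in a single row; (3) pattern $\mathcal{C}$: all non-empty boxes lie in a single column; (4) pattern $\mathcal{R}\cup\mathcal{C}$: all non-empty boxes lie in the union of one row $R$ and one column $C$, where $V(R)\not\subseteq V(C)$ and $V(C)\not\subseteq V(R)$.
   Context: A skew graph is defined from a table $T$ with $m$ rows and $n$ columns whose box $(i,j)$ contains a non-negative integer $t_{ij}$: place $t_{ij}$ distinct vertices in box $(i,j)$, and join two vertices by an edge if and only if their boxes lie in different rows and in different columns (vertices in the same row, same column, or same box are non-adjacent). Equivalently, skew graphs are exactly the complements of line graphs of bipartite multigraphs. A box is non-empty if it contains at least one vertex. For a row $R$ (resp. column $C$) of $T$, $V(R)$ (resp. $V(C)$) is the set of vertices located in boxes of that row (resp. column). *)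

theory Defs
  imports Main
begin

text \<open>A table with m rows and n columns is a function t :: nat => nat => nat,
  where t i j (for i < m, j < n) is the number of vertices in box (i,j).\<close>

definition skew_vertices :: "nat \<Rightarrow> nat \<Rightarrow> (nat \<Rightarrow> nat \<Rightarrow> nat) \<Rightarrow> (nat \<times> nat \<times> nat) set" where
  "skew_vertices m n t = {(i, j, k). i < m \<and> j < n \<and> k < t i j}"

definition skew_adj :: "nat \<Rightarrow> nat \<Rightarrow> (nat \<Rightarrow> nat \<Rightarrow> nat) \<Rightarrow> nat \<times> nat \<times> nat \<Rightarrow> nat \<times> nat \<times> nat \<Rightarrow> bool" where
  "skew_adj m n t u v \<longleftrightarrow> u \<in> skew_vertices m n t \<and> v \<in> skew_vertices m n t \<and>
     fst u \<noteq> fst v \<and> fst (snd u) \<noteq> fst (snd v)"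

definition skew_disconnected :: "nat \<Rightarrow> nat \<Rightarrow> (nat \<Rightarrow> nat \<Rightarrow> nat) \<Rightarrow> bool" where
  "skew_disconnected m n t \<longleftrightarrow>
     (\<exists>u \<in> skew_vertices m n t. \<exists>v \<in> skew_vertices m n t. \<not> (skew_adj m n t)\<^sup>*\<^sup>* u v)"

definition nonempty_boxes :: "nat \<Rightarrow> nat \<Rightarrow> (nat \<Rightarrow> nat \<Rightarrow> nat) \<Rightarrow> (nat \<times> nat) set" where
  "nonempty_boxes m n t = {(i, j). i < m \<and> j < n \<and> 0 < t i j}"

definition row_vertices :: "nat \<Rightarrow> nat \<Rightarrow> (nat \<Rightarrow> nat \<Rightarrow> nat) \<Rightarrow> nat \<Rightarrow> (nat \<times> nat \<times> nat) set" where
  "row_vertices m n t r = {v \<in> skew_vertices m n t. fst v = r}"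

definition col_vertices :: "nat \<Rightarrow> nat \<Rightarrow> (nat \<Rightarrow> nat \<Rightarrow> nat) \<Rightarrow> nat \<Rightarrow> (nat \<times> nat \<times> nat) set" where
  "col_vertices m n t c = {v \<in> skew_vertices m n t. fst (snd v) = c}"

end

theory Submission
  imports Defs
begin

lemma comb:
  fixes S A B :: "(nat \<times> nat) set"
  assumes SAB: "S = A \<union> B" and a0: "(i, j) \<in> A" and b0: "b0 \<in> B"
    and share: "\<forall>a\<in>A. \<forall>b\<in>B. fst a = fst b \<or> snd a = snd b"
  shows "(\<exists>i1 i2 j1 j2. (i1, j1) \<in> S \<and> (i2, j2) \<in> S \<and> i1 \<noteq> i2 \<and> j1 \<noteq> j2 \<and>
            S = {(i1, j1), (i1, j2), (i2, j1), (i2, j2)})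
       \<or> (\<exists>r c. (\<exists>y. (r, y) \<in> S) \<and> (\<exists>x. (x, c) \<in> S) \<and> (\<forall>(x, y) \<in> S. x = r \<or> y = c))"
proof (cases "\<forall>b\<in>B. fst b = i")
  case True
  have "\<forall>(x, y) \<in> S. x = i \<or> y = snd b0"
    using share b0 True SAB by fastforce
  then show ?thesis using a0 b0 SAB by (metis Un_iff prod.collapse)
next
  case F1: False
  show ?thesis
  proof (cases "\<forall>b\<in>B. snd b = j")
    case True
    have "\<forall>(x, y) \<in> S. x = fst b0 \<or> y = j"
      using share b0 True SAB by fastforce
    then show ?thesis using a0 b0 SAB by (metis Un_iff prod.collapse)
  next
    case False
    from F1 obtain i2 j' where b1: "(i2, j') \<in> B" "i2 \<noteq> i" by auto
    with share a0 have j': "j' = j" by fastforce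
    from False obtain i' j1 where b2: "(i', j1) \<in> B" "j1 \<noteq> j" by auto
    with share a0 have i': "i' = i" by fastforce
    have Asub: "A \<subseteq> {(i, j), (i2, j1)}"
    proof
      fix a assume "a \<in> A"
      with share b1 b2 j' i' have "fst a = i2 \<or> snd a = j" "fst a = i \<or> snd a = j1" by fastforce+
      with b1 b2 show "a \<in> {(i, j), (i2, j1)}" by (cases a) auto
    qed
    show ?thesis
    proof (cases "(i2, j1) \<in> A")
      case True
      have Bsub: "B \<subseteq> {(i, j1), (i2, j)}"
      proof
        fix b assume "b \<in> B"
        with share a0 True have "fst b = i \<or> snd b = j" "fst b = i2 \<or> snd b = j1" by fastforce+
        with b1 b2 show "b \<in> {(i, j1), (i2, j)}" by (cases b) auto
      qed
      have "S = {(i, j), (i, j1), (i2, j), (i2, j1)}"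
        using SAB Asub Bsub a0 True b1 b2 j' i' by auto
      then show ?thesis using b1 b2 by auto
    next
      case False
      have "A = {(i, j)}" using Asub False a0 by auto
      have "\<forall>(x, y) \<in> S. x = i \<or> y = j"
        using SAB \<open>A = {(i, j)}\<close> share a0 by fastforce
      then show ?thesis using a0 SAB by blast
    qed
  qed
qed

lemma cross:
  assumes "r < m" "c < n" "\<forall>(x, y) \<in> nonempty_boxes m n t. x = r \<or> y = c"
  shows "(\<exists>r < m. \<forall>(i, j) \<in> nonempty_boxes m n t. i = r)
       \<or> (\<exists>c < n. \<forall>(i, j) \<in> nonempty_boxes m n t. j = c)
       \<or> (\<exists>r < m. \<exists>c < n. (\<forall>(i, j) \<in> nonempty_boxes m n t. i = r \<or> j = c) \<and>
            \<not> row_vertices m n t r \<subseteq> col_vertices m n t c \<and>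
            \<not> col_vertices m n t c \<subseteq> row_vertices m n t r)"
proof (cases "row_vertices m n t r \<subseteq> col_vertices m n t c")
  case True
  have "\<forall>(x, y) \<in> nonempty_boxes m n t. y = c"
  proof (clarify)
    fix x y assume xy: "(x, y) \<in> nonempty_boxes m n t"
    show "y = c"
    proof (cases "x = r")
      case True
      then have "(x, y, 0) \<in> row_vertices m n t r" using xy
        by (auto simp: row_vertices_def skew_vertices_def nonempty_boxes_def)
      then show ?thesis using \<open>row_vertices m n t r \<subseteq> col_vertices m n t c\<close>
        by (auto simp: col_vertices_def)
    qed (use xy assms in auto)
  qed
  then show ?thesis using assms by blast
next
  case F: False
  show ?thesis
  proof (cases "col_vertices m n t c \<subseteq> row_vertices m n t r")
    case True
    have "\<forall>(x, y) \<in> nonempty_boxes m n t. x = r"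
    proof (clarify)
      fix x y assume xy: "(x, y) \<in> nonempty_boxes m n t"
      show "x = r"
      proof (cases "y = c")
        case True
        then have "(x, y, 0) \<in> col_vertices m n t c" using xy
          by (auto simp: col_vertices_def skew_vertices_def nonempty_boxes_def)
        then show ?thesis using True \<open>col_vertices m n t c \<subseteq> row_vertices m n t r\<close>
          by (auto simp: row_vertices_def)
      qed (use xy assms in auto)
    qed
    then show ?thesis using assms by blast
  next
    case False
    then show ?thesis using F assms by blast
  qed
qed

theorem theorem4:
  fixes m n :: nat and t :: "nat \<Rightarrow> nat \<Rightarrow> nat"
  assumes "skew_disconnected m n t"
  shows "(\<exists>i1 i2 j1 j2. i1 < m \<and> i2 < m \<and> j1 < n \<and> j2 < n \<and> i1 \<noteq> i2 \<and> j1 \<noteq> j2 \<and>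
            nonempty_boxes m n t = {(i1, j1), (i1, j2), (i2, j1), (i2, j2)})
       \<or> (\<exists>r < m. \<forall>(i, j) \<in> nonempty_boxes m n t. i = r)
       \<or> (\<exists>c < n. \<forall>(i, j) \<in> nonempty_boxes m n t. j = c)
       \<or> (\<exists>r < m. \<exists>c < n. (\<forall>(i, j) \<in> nonempty_boxes m n t. i = r \<or> j = c) \<and>
            \<not> row_vertices m n t r \<subseteq> col_vertices m n t c \<and>
            \<not> col_vertices m n t c \<subseteq> row_vertices m n t r)"
proof -
  let ?S = "nonempty_boxes m n t"
  let ?V = "skew_vertices m n t"
  let ?E = "skew_adj m n t"
  from assms obtain u v where u: "u \<in> ?V" and v: "v \<in> ?V" and nr: "\<not> ?E\<^sup>*\<^sup>* u v"
    unfolding skew_disconnected_def by blast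
  have inS: "(fst w, fst (snd w)) \<in> ?S" if "w \<in> ?V" for w
    using that by (auto simp: skew_vertices_def nonempty_boxes_def)
  have box0: "(x, y, 0) \<in> ?V" if "(x, y) \<in> ?S" for x y
    using that by (auto simp: skew_vertices_def nonempty_boxes_def)
  have Sb: "x < m \<and> y < n" if "(x, y) \<in> ?S" for x y
    using that by (auto simp: nonempty_boxes_def)
  have reachV: "w \<in> ?V" if "?E\<^sup>*\<^sup>* u w" for w
    using that u by (induction rule: rtranclp_induct) (auto simp: skew_adj_def)
  define A where "A = {(fst w, fst (snd w)) | w. ?E\<^sup>*\<^sup>* u w}"
  define B where "B = ?S - A"
  have AS: "A \<subseteq> ?S" unfolding A_def using reachV inS by blast
  have crossgoal: ?thesis if "\<exists>r c. (\<exists>y. (r, y) \<in> ?S) \<and> (\<exists>x. (x, c) \<in> ?S) \<and> (\<forall>(x, y) \<in> ?S. x = r \<or> y = c)"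
  proof -
    from that obtain r c y x where "(r, y) \<in> ?S" "(x, c) \<in> ?S" "\<forall>(x, y) \<in> ?S. x = r \<or> y = c"
      by blast
    with Sb cross[of r m c n t] show ?thesis by blast
  qed
  show ?thesis
  proof (cases "(fst v, fst (snd v)) \<in> A")
    case True
    then obtain w where w: "?E\<^sup>*\<^sup>* u w" "fst w = fst v" "fst (snd w) = fst (snd v)"
      by (auto simp: A_def)
    have key: "x = fst v \<or> y = fst (snd v)" if xy: "(x, y) \<in> ?S" for x y
    proof (rule ccontr)
      assume ne: "\<not> (x = fst v \<or> y = fst (snd v))"
      have "?E w (x, y, 0)" using box0[OF xy] reachV[OF w(1)] w ne by (auto simp: skew_adj_def)
      moreover have "?E (x, y, 0) v" using box0[OF xy] v ne by (auto simp: skew_adj_def)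
      ultimately have "?E\<^sup>*\<^sup>* u v" using w(1)
        by (meson rtranclp.rtrancl_into_rtrancl)
      with nr show False by simp
    qed
    have "\<forall>(x, y) \<in> ?S. x = fst v \<or> y = fst (snd v)" using key by auto
    then show ?thesis by (intro crossgoal exI[of _ "fst v"] exI[of _ "fst (snd v)"] conjI) (use inS[OF v] in auto)
  next
    case False
    have share: "\<forall>a\<in>A. \<forall>b\<in>B. fst a = fst b \<or> snd a = snd b"
    proof (intro ballI, rule ccontr)
      fix a b assume a: "a \<in> A" and b: "b \<in> B" and ne: "\<not> (fst a = fst b \<or> snd a = snd b)"
      from a obtain w where w: "?E\<^sup>*\<^sup>* u w" "a = (fst w, fst (snd w))" by (auto simp: A_def)
      obtain x y where bxy: "b = (x, y)" by (cases b)
      have bS: "(x, y) \<in> ?S" using b bxy B_def by auto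
      have "?E w (x, y, 0)" using box0[OF bS] reachV[OF w(1)] w ne bxy by (auto simp: skew_adj_def)
      then have "?E\<^sup>*\<^sup>* u (x, y, 0)" using w(1) by (meson rtranclp.rtrancl_into_rtrancl)
      then have "(x, y) \<in> A" unfolding A_def by force
      with b bxy show False by (auto simp: B_def)
    qed
    have a0: "(fst u, fst (snd u)) \<in> A" unfolding A_def by blast
    have b0: "(fst v, fst (snd v)) \<in> B" using False inS[OF v] by (auto simp: B_def)
    have SAB: "?S = A \<union> B" using AS by (auto simp: B_def)
    from comb[OF SAB a0 b0 share] show ?thesis
    proof
      assume "\<exists>i1 i2 j1 j2. (i1, j1) \<in> ?S \<and> (i2, j2) \<in> ?S \<and> i1 \<noteq> i2 \<and> j1 \<noteq> j2 \<and>
            ?S = {(i1, j1), (i1, j2), (i2, j1), (i2, j2)}"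
      then obtain i1 i2 j1 j2 where h: "(i1, j1) \<in> ?S" "(i2, j2) \<in> ?S" "i1 \<noteq> i2" "j1 \<noteq> j2"
            "?S = {(i1, j1), (i1, j2), (i2, j1), (i2, j2)}" by blast
      have "i1 < m" "i2 < m" "j1 < n" "j2 < n" using Sb h(1,2) by auto
      then show ?thesis using h(3-5) by (intro disjI1 exI[of _ i1] exI[of _ i2] exI[of _ j1] exI[of _ j2]) simp
    qed (rule crossgoal)
  qed
qed

end
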